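(* Let $a\ge3$ be an integer. In the graded cluster algebra $\mathcal{A}\Big((x_1,x_2,x_3),\begin{pmatrix}0&a&-2\\-a&0&a\\2&-a&0\end{pmatrix},(a,2,a)\Big)$ there are infinitely many degrees each of which is the degree of infinitely many distinct cluster variables.
   Context: Graded cluster algebras: for a $3\times3$ skew-symmetric integer matrix $B=(b_{ij})$, $\mu_k(B)=(b'_{ij})$ with $b'_{ij}=-b_{ij}$ if $i=k$ or $j=k$, $b'_{ij}=b_{ij}+\operatorname{sgn}(b_{ik})\max(b_{ik}b_{kj},0)$ otherwise. A seed $((x_1,x_2,x_3),B)$ mutates in direction $k$ to $(x',\mu_k B)$ with $x'_j=x_j$ ($j\ne k$), $x'_k=\big(\prod_{b_{ik}>0}x_i^{b_{ik}}+\prod_{b_{ik}<0}x_i^{-b_{ik}}\big)/x_k$. Cluster variables are all entries of reachable clusters; $\mathcal{A}(x,B,g)$ is graded by $\deg x_i=g_i$ where $Bg=0$; under mutation at $k$ the degree vector becomes $g'$ with $g'_j=g_j$ ($j\ne k$), $g'_k=-g_k+\sum_{b_{ik}>0}b_{ik}g_i$; every cluster variable is homogeneous. *)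

theory Defs
  imports "HOL-Computational_Algebra.Polynomial" "HOL-Computational_Algebra.Fraction_Field"
begin

text \<open>The ambient field Q(x1,x2,x3), realised as the fraction field of Z[x1,x2,x3]
  (iterated univariate polynomials). Indices 1,2,3 of the paper are 0,1,2 here.\<close>

type_synonym rf = "int poly poly poly fract"

definition X0 :: rf where "X0 = Fract [:[:[:0,1:]:]:] 1"
definition X1 :: rf where "X1 = Fract [:[:0,1:]:] 1"
definition X2 :: rf where "X2 = Fract [:0,1:] 1"

definition init_cluster :: "nat \<Rightarrow> rf" where
  "init_cluster i = (if i = 0 then X0 else if i = 1 then X1 else X2)"

type_synonym mat = "nat \<Rightarrow> nat \<Rightarrow> int"

definition mut_mat :: "nat \<Rightarrow> mat \<Rightarrow> mat" where
  "mut_mat k B i j =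
     (if i = k \<or> j = k then - B i j
      else B i j + sgn (B i k) * max (B i k * B k j) 0)"

type_synonym seed = "(nat \<Rightarrow> rf) \<times> mat \<times> (nat \<Rightarrow> int)"

definition mutate :: "nat \<Rightarrow> seed \<Rightarrow> seed" where
  "mutate k s = (case s of (x, B, g) \<Rightarrow>
     (x(k := ((\<Prod>i\<in>{i. i < 3 \<and> B i k > 0}. x i ^ nat (B i k))
              + (\<Prod>i\<in>{i. i < 3 \<and> B i k < 0}. x i ^ nat (- B i k))) / x k),
      mut_mat k B,
      g(k := - g k + (\<Sum>i\<in>{i. i < 3 \<and> B i k > 0}. B i k * g i))))"

definition mutate_seq :: "nat list \<Rightarrow> seed \<Rightarrow> seed" where
  "mutate_seq ks s = fold mutate ks s"

definition reachable_seeds :: "seed \<Rightarrow> seed set" where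
  "reachable_seeds s0 = {mutate_seq ks s0 | ks. set ks \<subseteq> {0,1,2}}"

definition graded_cluster_vars :: "seed \<Rightarrow> (rf \<times> int) set" where
  "graded_cluster_vars s0 =
     {(x i, g i) | x B g i. (x, B, g) \<in> reachable_seeds s0 \<and> i < 3}"

definition Bmat :: "int \<Rightarrow> mat" where
  "Bmat a i j =
     (if (i, j) = (0, 1) then a else if (i, j) = (0, 2) then -2
      else if (i, j) = (1, 0) then -a else if (i, j) = (1, 2) then a
      else if (i, j) = (2, 0) then 2 else if (i, j) = (2, 1) then -a else 0)"

definition gvec :: "int \<Rightarrow> nat \<Rightarrow> int" where
  "gvec a i = (if i = 1 then 2 else a)"

end

theory Submission
  imports Defs
begin

definition hev :: "int poly poly poly \<Rightarrow> int" where
  "hev p = poly (poly (poly p [:[:2:]:]) [:1:]) 1"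

lemma hev_add[simp]: "hev (p + q) = hev p + hev q" by (simp add: hev_def)
lemma hev_mult[simp]: "hev (p * q) = hev p * hev q" by (simp add: hev_def)
lemma hev_one[simp]: "hev 1 = 1" by (simp add: hev_def)

definition Rv :: "rf \<Rightarrow> real \<Rightarrow> bool" where
  "Rv u r \<longleftrightarrow> (\<exists>p q. q \<noteq> 0 \<and> hev q \<noteq> 0 \<and> u = Fract p q \<and> r = real_of_int (hev p) / real_of_int (hev q))"

lemma Rv_unique: assumes "Rv u r" "Rv u s" shows "r = s"
proof -
  obtain p q where A: "q \<noteq> 0" "hev q \<noteq> 0" "u = Fract p q" "r = real_of_int (hev p) / real_of_int (hev q)"
    using assms(1) unfolding Rv_def by blast
  obtain p' q' where B: "q' \<noteq> 0" "hev q' \<noteq> 0" "u = Fract p' q'" "s = real_of_int (hev p') / real_of_int (hev q')"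
    using assms(2) unfolding Rv_def by blast
  have "p * q' = p' * q" using A B eq_fract(1) by metis
  then have "hev p * hev q' = hev p' * hev q" by (metis hev_mult)
  then have "real_of_int (hev p) * real_of_int (hev q') = real_of_int (hev p') * real_of_int (hev q)"
    by (metis of_int_mult)
  then show ?thesis unfolding A(4) B(4) using A(2) B(2) by (simp add: frac_eq_eq)
qed

lemma Rv_add: assumes "Rv u r" "Rv w s" shows "Rv (u + w) (r + s)"
proof -
  obtain p q where A: "q \<noteq> 0" "hev q \<noteq> 0" "u = Fract p q" "r = real_of_int (hev p) / real_of_int (hev q)"
    using assms(1) unfolding Rv_def by blast
  obtain p' q' where B: "q' \<noteq> 0" "hev q' \<noteq> 0" "w = Fract p' q'" "s = real_of_int (hev p') / real_of_int (hev q')"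
    using assms(2) unfolding Rv_def by blast
  show ?thesis unfolding Rv_def
    apply (rule exI[of _ "p * q' + p' * q"], rule exI[of _ "q * q'"])
    using A(1,2,3) B(1,2,3) unfolding A(4) B(4) by (simp add: field_simps)
qed

lemma Rv_mult: assumes "Rv u r" "Rv w s" shows "Rv (u * w) (r * s)"
proof -
  obtain p q where A: "q \<noteq> 0" "hev q \<noteq> 0" "u = Fract p q" "r = real_of_int (hev p) / real_of_int (hev q)"
    using assms(1) unfolding Rv_def by blast
  obtain p' q' where B: "q' \<noteq> 0" "hev q' \<noteq> 0" "w = Fract p' q'" "s = real_of_int (hev p') / real_of_int (hev q')"
    using assms(2) unfolding Rv_def by blast
  show ?thesis unfolding Rv_def
    apply (rule exI[of _ "p * p'"], rule exI[of _ "q * q'"])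
    using A(1,2,3) B(1,2,3) unfolding A(4) B(4) by (simp add: field_simps)
qed

lemma Rv_div: assumes "Rv u r" "Rv w s" "s \<noteq> 0" shows "Rv (u / w) (r / s)"
proof -
  obtain p q where A: "q \<noteq> 0" "hev q \<noteq> 0" "u = Fract p q" "r = real_of_int (hev p) / real_of_int (hev q)"
    using assms(1) unfolding Rv_def by blast
  obtain p' q' where B: "q' \<noteq> 0" "hev q' \<noteq> 0" "w = Fract p' q'" "s = real_of_int (hev p') / real_of_int (hev q')"
    using assms(2) unfolding Rv_def by blast
  have hp: "hev p' \<noteq> 0" using B assms(3) by auto
  then have p0: "p' \<noteq> 0" by (auto simp: hev_def)
  show ?thesis unfolding Rv_def
    apply (rule exI[of _ "p * q'"], rule exI[of _ "q * p'"])
    using A(1,2,3) B(1,2,3) hp p0 unfolding A(4) B(4) by (simp add: field_simps)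
qed

lemma Rv_one: "Rv 1 1"
  unfolding Rv_def by (rule exI[of _ 1], rule exI[of _ 1]) (simp add: One_fract_def)

lemma Rv_pow: assumes "Rv u r" shows "Rv (u ^ n) (r ^ n)"
  by (induction n) (auto simp: Rv_one intro: Rv_mult assms)

lemma Rv_X0: "Rv X0 1"
  unfolding Rv_def X0_def by (rule exI[of _ "[:[:[:0,1:]:]:]"], rule exI[of _ 1]) (simp add: hev_def)
lemma Rv_X1: "Rv X1 1"
  unfolding Rv_def X1_def by (rule exI[of _ "[:[:0,1:]:]"], rule exI[of _ 1]) (simp add: hev_def)
lemma Rv_X2: "Rv X2 2"
  unfolding Rv_def X2_def by (rule exI[of _ "[:0,1:]"], rule exI[of _ 1]) (simp add: hev_def)


definition Mp :: "int \<Rightarrow> int \<Rightarrow> int \<Rightarrow> mat" where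
  "Mp a p q i j =
     (if (i, j) = (0, 1) then a else if (i, j) = (0, 2) then -p
      else if (i, j) = (1, 0) then -a else if (i, j) = (1, 2) then q
      else if (i, j) = (2, 0) then p else if (i, j) = (2, 1) then -q else 0)"

definition Mn :: "int \<Rightarrow> int \<Rightarrow> int \<Rightarrow> mat" where
  "Mn a p q i j = - Mp a p q i j"

definition Gv :: "int \<Rightarrow> int \<Rightarrow> int \<Rightarrow> nat \<Rightarrow> int" where
  "Gv a p q i = (if i = 0 then q else if i = 1 then p else a)"

lemma Bmat_Mp: "Bmat a = Mp a 2 a"
  by (rule ext)+ (simp add: Bmat_def Mp_def)

lemma gvec_Gv: "gvec a = Gv a 2 a"
  by (rule ext) (simp add: gvec_def Gv_def)

lemma less3: "(i::nat) < 3 \<longleftrightarrow> i = 0 \<or> i = 1 \<or> i = 2" by auto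

lemma mm1: assumes "a > 0" "q > 0" shows "mut_mat 1 (Mp a p q) = Mn a (a*q-p) q"
  by (rule ext)+ (use assms in \<open>auto simp: mut_mat_def Mp_def Mn_def sgn_if\<close>)

lemma mm0: assumes "a > 0" "p > 0" shows "mut_mat 0 (Mn a p q) = Mp a p (a*p-q)"
  by (rule ext)+ (use assms in \<open>auto simp: mut_mat_def Mp_def Mn_def sgn_if\<close>)

lemma mmB0: assumes "a > 0" shows "mut_mat 0 (Mp a 2 a) = Mn a 2 a"
  by (rule ext)+ (use assms in \<open>auto simp: mut_mat_def Mp_def Mn_def sgn_if\<close>)

lemma mmB2: assumes "a > 0" shows "mut_mat 2 (Mn a 2 a) = Mp a 2 a"
  by (rule ext)+ (use assms in \<open>auto simp: mut_mat_def Mp_def Mn_def sgn_if\<close>)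

lemma mut1: assumes "a > 0" "q > 0"
  shows "mutate 1 (x, Mp a p q, g) = (x(1 := (x 0 ^ nat a + x 2 ^ nat q) / x 1), Mn a (a*q-p) q, g(1 := - g 1 + a * g 0))"
proof -
  have s1: "{i. i < 3 \<and> Mp a p q i 1 > 0} = {0}" using assms by (auto simp: Mp_def less3)
  have s2: "{i. i < 3 \<and> Mp a p q i 1 < 0} = {2}" using assms by (auto simp: Mp_def less3)
  show ?thesis unfolding mutate_def prod.case s1 s2 mm1[OF assms] using assms by (simp add: Mp_def)
qed

lemma mut0: assumes "a > 0" "p > 0"
  shows "mutate 0 (x, Mn a p q, g) = (x(0 := (x 1 ^ nat a + x 2 ^ nat p) / x 0), Mp a p (a*p-q), g(0 := - g 0 + a * g 1))"
proof -
  have s1: "{i. i < 3 \<and> Mn a p q i 0 > 0} = {1}" using assms by (auto simp: Mn_def Mp_def less3)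
  have s2: "{i. i < 3 \<and> Mn a p q i 0 < 0} = {2}" using assms by (auto simp: Mn_def Mp_def less3)
  show ?thesis unfolding mutate_def prod.case s1 s2 mm0[OF assms] using assms by (simp add: Mn_def Mp_def)
qed

lemma mutB0: assumes "a > 0"
  shows "mutate 0 (x, Mp a 2 a, g) = (x(0 := (x 2 ^ 2 + x 1 ^ nat a) / x 0), Mn a 2 a, g(0 := - g 0 + 2 * g 2))"
proof -
  have s1: "{i. i < 3 \<and> Mp a 2 a i 0 > 0} = {2}" using assms by (auto simp: Mp_def less3)
  have s2: "{i. i < 3 \<and> Mp a 2 a i 0 < 0} = {1}" using assms by (auto simp: Mp_def less3)
  show ?thesis unfolding mutate_def prod.case s1 s2 mmB0[OF assms] using assms by (simp add: Mp_def)
qed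

lemma mutB2: assumes "a > 0"
  shows "mutate 2 (x, Mn a 2 a, g) = (x(2 := (x 0 ^ 2 + x 1 ^ nat a) / x 2), Mp a 2 a, g(2 := - g 2 + 2 * g 0))"
proof -
  have s1: "{i. i < 3 \<and> Mn a 2 a i 2 > 0} = {0}" using assms by (auto simp: Mn_def Mp_def less3)
  have s2: "{i. i < 3 \<and> Mn a 2 a i 2 < 0} = {1}" using assms by (auto simp: Mn_def Mp_def less3)
  show ?thesis unfolding mutate_def prod.case s1 s2 mmB2[OF assms] using assms by (simp add: Mn_def Mp_def)
qed


lemma ineqA:
  fixes r0 r1 r2 :: real
  assumes "1 \<le> r1" "r1 \<le> r0" "1 \<le> r2" "2 \<le> n"
  shows "r0 \<le> (r0 ^ n + r2 ^ m) / r1"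
proof -
  have "r0 ^ 2 \<le> r0 ^ n" using assms by (intro power_increasing) auto
  moreover have "r0 * r1 \<le> r0 ^ 2" using assms by (simp add: power2_eq_square mult_left_mono)
  moreover have "0 \<le> r2 ^ m" using assms by simp
  ultimately have "r0 * r1 \<le> r0 ^ n + r2 ^ m" by linarith
  then show ?thesis using assms by (simp add: pos_le_divide_eq)
qed

lemma ineqB:
  fixes r0 r2 :: real
  assumes "1 \<le> r0" "2 * r0 \<le> r2"
  shows "2 * r2 \<le> (r2 ^ 2 + 1) / r0"
proof -
  have "2 * r2 * r0 \<le> r2 * r2" using assms by (simp add: mult_left_mono mult.commute mult.left_commute)
  then have "2 * r2 * r0 \<le> r2 ^ 2 + 1" by (simp add: power2_eq_square)
  then show ?thesis using assms by (simp add: pos_le_divide_eq)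
qed

fun pq :: "int \<Rightarrow> nat \<Rightarrow> int \<times> int" where
  "pq a 0 = (2, a)"
| "pq a (Suc k) = (let p' = a * snd (pq a k) - fst (pq a k) in (p', a * p' - snd (pq a k)))"

lemma pq_bounds: assumes "a \<ge> 3" shows "2 \<le> fst (pq a k) \<and> fst (pq a k) < snd (pq a k)"
proof (induction k)
  case 0 then show ?case using assms by simp
next
  case (Suc k)
  obtain p q where pq: "pq a k = (p, q)" by (cases "pq a k")
  have h: "2 \<le> p" "p < q" using Suc pq by auto
  have "3 * q \<le> a * q" using assms h by (intro mult_right_mono) auto
  then have p': "a * q - p > q" using h by linarith
  define P where "P = a * q - p"
  have P1: "P > q" using p' P_def by simp
  have "3 * P \<le> a * P" using assms P1 h by (intro mult_right_mono) auto
  then have "a * P - q > P" using h P1 by linarith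
  then have "a * (a*q-p) - q > a*q-p" unfolding P_def .
  then show ?case using pq p' h by (simp add: Let_def)
qed

lemma pq_smono: assumes "a \<ge> 3" shows "snd (pq a k) < snd (pq a (Suc k))"
proof -
  obtain p q where pq: "pq a k = (p, q)" by (cases "pq a k")
  have h: "2 \<le> p" "p < q" using pq_bounds[OF assms, of k] pq by auto
  have "3 * q \<le> a * q" using assms h by (intro mult_right_mono) auto
  then have p': "a * q - p > q" using h by linarith
  define P where "P = a * q - p"
  have P1: "P > q" using p' P_def by simp
  have "3 * P \<le> a * P" using assms P1 h by (intro mult_right_mono) auto
  then have "a * P - q > P" using h P1 by linarith
  then have "a * (a*q-p) - q > a*q-p" unfolding P_def .
  then show ?thesis using pq p' h by (simp add: Let_def)
qed

lemma seq_funpow: "mutate_seq (concat (replicate k [i, j])) s = ((mutate j \<circ> mutate i) ^^ k) s"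
proof (induction k arbitrary: s)
  case 0 then show ?case by (simp add: mutate_seq_def)
next
  case (Suc k)
  have "mutate_seq (concat (replicate (Suc k) [i, j])) s = mutate_seq (concat (replicate k [i, j])) (mutate j (mutate i s))"
    by (simp add: mutate_seq_def)
  also have "\<dots> = ((mutate j \<circ> mutate i) ^^ k) (mutate j (mutate i s))" by (rule Suc)
  also have "\<dots> = ((mutate j \<circ> mutate i) ^^ Suc k) s" by (simp only: funpow_Suc_right o_apply)
  finally show ?case .
qed

lemma phase1:
  assumes "a \<ge> 3"
  shows "\<exists>x r0 r2. ((mutate 2 \<circ> mutate 0) ^^ m) (init_cluster, Mp a 2 a, Gv a 2 a) = (x, Mp a 2 a, Gv a 2 a)
     \<and> Rv (x 0) r0 \<and> Rv (x 1) 1 \<and> Rv (x 2) r2 \<and> real m + 1 \<le> r0 \<and> 2 * r0 \<le> r2"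
proof (induction m)
  case 0
  show ?case
    by (rule exI[of _ init_cluster], rule exI[of _ 1], rule exI[of _ 2])
       (simp add: init_cluster_def Rv_X0 Rv_X1 Rv_X2)
next
  case (Suc m)
  then obtain x r0 r2 where st: "((mutate 2 \<circ> mutate 0) ^^ m) (init_cluster, Mp a 2 a, Gv a 2 a) = (x, Mp a 2 a, Gv a 2 a)"
    and R: "Rv (x 0) r0" "Rv (x 1) 1" "Rv (x 2) r2" and b: "real m + 1 \<le> r0" "2 * r0 \<le> r2" by blast
  have a0: "a > 0" using assms by simp
  define y0 where "y0 = (x 2 ^ 2 + x 1 ^ nat a) / x 0"
  define y2 where "y2 = (y0 ^ 2 + x 1 ^ nat a) / x 2"
  define s0 where "s0 = (r2 ^ 2 + 1) / r0"
  define s2 where "s2 = (s0 ^ 2 + 1) / r2"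
  have g1: "(Gv a 2 a)(0 := - Gv a 2 a 0 + 2 * Gv a 2 a 2) = Gv a 2 a"
    by (rule ext) (simp add: Gv_def)
  have g2: "(Gv a 2 a)(2 := - Gv a 2 a 2 + 2 * Gv a 2 a 0) = Gv a 2 a"
    by (rule ext) (simp add: Gv_def)
  have m1: "mutate 0 (x, Mp a 2 a, Gv a 2 a) = (x(0 := y0), Mn a 2 a, Gv a 2 a)"
    using mutB0[OF a0] g1 y0_def by simp
  have m2: "mutate 2 (x(0 := y0), Mn a 2 a, Gv a 2 a) = (x(0 := y0, 2 := y2), Mp a 2 a, Gv a 2 a)"
    using mutB2[OF a0, of "x(0 := y0)" "Gv a 2 a"] g2 y2_def by simp
  have r0p: "r0 \<ge> 1" using b by simp
  have "Rv y0 s0" unfolding y0_def s0_def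
    using Rv_div[OF Rv_add[OF Rv_pow[OF R(3)] Rv_pow[OF R(2), of "nat a"]] R(1)] r0p by simp
  moreover have s0b: "2 * r2 \<le> s0" unfolding s0_def using ineqB r0p b(2) by simp
  moreover have "Rv y2 s2" unfolding y2_def s2_def
    using Rv_div[OF Rv_add[OF Rv_pow[OF \<open>Rv y0 s0\<close>] Rv_pow[OF R(2), of "nat a"]] R(3)] r0p b by simp
  moreover have "2 * s0 \<le> s2" unfolding s2_def using ineqB[of r2 s0] r0p b s0b by simp
  moreover have "real (Suc m) + 1 \<le> s0" using s0b b by simp
  moreover have "((mutate 2 \<circ> mutate 0) ^^ Suc m) (init_cluster, Mp a 2 a, Gv a 2 a) = (x(0 := y0, 2 := y2), Mp a 2 a, Gv a 2 a)"
    using st m1 m2 by simp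
  moreover have "Rv ((x(0 := y0, 2 := y2)) 1) 1" using R(2) by simp
  ultimately show ?case by fastforce
qed


lemma phase2:
  assumes "a \<ge> 3" and R0: "Rv (x 0) r0" "Rv (x 1) r1" "Rv (x 2) r2"
    and b0: "1 \<le> r1" "r1 \<le> r0" "1 \<le> r2" "T \<le> r0"
  shows "\<exists>x' t0 t1 t2. ((mutate 0 \<circ> mutate 1) ^^ k) (x, Mp a 2 a, Gv a 2 a)
      = (x', Mp a (fst (pq a k)) (snd (pq a k)), Gv a (fst (pq a k)) (snd (pq a k)))
     \<and> Rv (x' 0) t0 \<and> Rv (x' 1) t1 \<and> Rv (x' 2) t2 \<and> 1 \<le> t1 \<and> t1 \<le> t0 \<and> 1 \<le> t2 \<and> T \<le> t0"
proof (induction k)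
  case 0
  show ?case using R0 b0 by auto
next
  case (Suc k)
  then obtain y t0 t1 t2 where st: "((mutate 0 \<circ> mutate 1) ^^ k) (x, Mp a 2 a, Gv a 2 a)
      = (y, Mp a (fst (pq a k)) (snd (pq a k)), Gv a (fst (pq a k)) (snd (pq a k)))"
    and R: "Rv (y 0) t0" "Rv (y 1) t1" "Rv (y 2) t2" and b: "1 \<le> t1" "t1 \<le> t0" "1 \<le> t2" "T \<le> t0"
    by blast
  obtain p q where pqk: "pq a k = (p, q)" by (cases "pq a k")
  have h: "2 \<le> p" "p < q" using pq_bounds[OF assms(1), of k] pqk by auto
  have a0: "a > 0" "q > 0" using assms h by auto
  define p' where "p' = a * q - p"
  define q' where "q' = a * p' - q"
  have pq': "pq a (Suc k) = (p', q')" using pqk p'_def q'_def by (simp add: Let_def)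
  have p'0: "p' > 0" using pq_bounds[OF assms(1), of "Suc k"] pq' by auto
  define z1 where "z1 = (y 0 ^ nat a + y 2 ^ nat q) / y 1"
  define z0 where "z0 = (z1 ^ nat a + y 2 ^ nat p') / y 0"
  define u1 where "u1 = (t0 ^ nat a + t2 ^ nat q) / t1"
  define u0 where "u0 = (u1 ^ nat a + t2 ^ nat p') / t0"
  have g1: "(Gv a p q)(1 := - Gv a p q 1 + a * Gv a p q 0) = Gv a p' q"
    by (rule ext) (simp add: Gv_def p'_def)
  have g2: "(Gv a p' q)(0 := - Gv a p' q 0 + a * Gv a p' q 1) = Gv a p' q'"
    by (rule ext) (simp add: Gv_def q'_def)
  have m1: "mutate 1 (y, Mp a p q, Gv a p q) = (y(1 := z1), Mn a p' q, Gv a p' q)"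
    using mut1[OF a0, of y p "Gv a p q"] g1 z1_def p'_def by simp
  have m2: "mutate 0 (y(1 := z1), Mn a p' q, Gv a p' q) = (y(1 := z1, 0 := z0), Mp a p' q', Gv a p' q')"
    using mut0[OF a0(1) p'0, of "y(1 := z1)" q "Gv a p' q"] g2 z0_def q'_def by simp
  have na: "2 \<le> nat a" using assms by simp
  have Rz1: "Rv z1 u1" unfolding z1_def u1_def
    using Rv_div[OF Rv_add[OF Rv_pow[OF R(1)] Rv_pow[OF R(3)]] R(2)] b by simp
  have u1b: "t0 \<le> u1" unfolding u1_def using ineqA[OF b(1) b(2) b(3) na] .
  have Rz0: "Rv z0 u0" unfolding z0_def u0_def
    using Rv_div[OF Rv_add[OF Rv_pow[OF Rz1] Rv_pow[OF R(3)]] R(1)] b by simp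
  have u0b: "u1 \<le> u0" unfolding u0_def using ineqA[of t0 u1 t2, OF _ u1b b(3) na] b by simp
  have "((mutate 0 \<circ> mutate 1) ^^ Suc k) (x, Mp a 2 a, Gv a 2 a) = (y(1 := z1, 0 := z0), Mp a p' q', Gv a p' q')"
    using st m1 m2 pqk by simp
  then have E: "((mutate 0 \<circ> mutate 1) ^^ Suc k) (x, Mp a 2 a, Gv a 2 a)
      = (y(1 := z1, 0 := z0), Mp a (fst (pq a (Suc k))) (snd (pq a (Suc k))), Gv a (fst (pq a (Suc k))) (snd (pq a (Suc k))))"
    using pq' by simp
  have "Rv ((y(1 := z1, 0 := z0)) 0) u0" "Rv ((y(1 := z1, 0 := z0)) 1) u1" "Rv ((y(1 := z1, 0 := z0)) 2) t2"
    using Rz0 Rz1 R(3) by auto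
  moreover have "1 \<le> u1" "u1 \<le> u0" "1 \<le> t2" "T \<le> u0" using u1b u0b b by auto
  ultimately show ?case using E by blast
qed


lemma key:
  assumes "a \<ge> 3"
  shows "\<exists>v r. (v, snd (pq a k)) \<in> graded_cluster_vars (init_cluster, Bmat a, gvec a) \<and> Rv v r \<and> real m + 1 \<le> r"
proof -
  obtain x r0 r2 where st: "((mutate 2 \<circ> mutate 0) ^^ m) (init_cluster, Mp a 2 a, Gv a 2 a) = (x, Mp a 2 a, Gv a 2 a)"
    and R: "Rv (x 0) r0" "Rv (x 1) 1" "Rv (x 2) r2" and b: "real m + 1 \<le> r0" "2 * r0 \<le> r2"
    using phase1[OF assms] by blast
  obtain x' t0 t1 t2 where st2: "((mutate 0 \<circ> mutate 1) ^^ k) (x, Mp a 2 a, Gv a 2 a)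
      = (x', Mp a (fst (pq a k)) (snd (pq a k)), Gv a (fst (pq a k)) (snd (pq a k)))"
    and R2: "Rv (x' 0) t0" and b2: "real m + 1 \<le> t0"
    using phase2[OF assms R, of "real m + 1" k] b by auto
  define ks where "ks = concat (replicate m [0, 2]) @ concat (replicate k [1, 0::nat])"
  have "mutate_seq ks (init_cluster, Bmat a, gvec a) =
      mutate_seq (concat (replicate k [1, 0])) (mutate_seq (concat (replicate m [0, 2])) (init_cluster, Bmat a, gvec a))"
    unfolding ks_def mutate_seq_def by simp
  also have "\<dots> = (x', Mp a (fst (pq a k)) (snd (pq a k)), Gv a (fst (pq a k)) (snd (pq a k)))"
    unfolding seq_funpow Bmat_Mp gvec_Gv st st2 ..
  finally have E: "mutate_seq ks (init_cluster, Bmat a, gvec a)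
     = (x', Mp a (fst (pq a k)) (snd (pq a k)), Gv a (fst (pq a k)) (snd (pq a k)))" .
  have ks: "set ks \<subseteq> {0,1,2}" unfolding ks_def by auto
  have RS: "(x', Mp a (fst (pq a k)) (snd (pq a k)), Gv a (fst (pq a k)) (snd (pq a k))) \<in> reachable_seeds (init_cluster, Bmat a, gvec a)"
    unfolding reachable_seeds_def using E ks by (metis (mono_tags, lifting) mem_Collect_eq)
  have "(x' 0, Gv a (fst (pq a k)) (snd (pq a k)) 0) \<in> graded_cluster_vars (init_cluster, Bmat a, gvec a)"
    unfolding graded_cluster_vars_def mem_Collect_eq
    by (rule exI[of _ x'], rule exI[of _ "Mp a (fst (pq a k)) (snd (pq a k))"], rule exI[of _ "Gv a (fst (pq a k)) (snd (pq a k))"], rule exI[of _ 0]) (use RS in simp)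
  then have "(x' 0, snd (pq a k)) \<in> graded_cluster_vars (init_cluster, Bmat a, gvec a)"
    by (simp add: Gv_def)
  then show ?thesis using R2 b2 by blast
qed

lemma fiber_infinite:
  assumes "a \<ge> 3"
  shows "infinite {v. (v, snd (pq a k)) \<in> graded_cluster_vars (init_cluster, Bmat a, gvec a)}"
proof
  let ?V = "{v. (v, snd (pq a k)) \<in> graded_cluster_vars (init_cluster, Bmat a, gvec a)}"
  assume fin: "finite ?V"
  define S where "S = (\<lambda>v. THE r. Rv v r) ` ?V"
  have finS: "finite S" using fin unfolding S_def by simp
  define B where "B = Max (insert 0 S)"
  obtain m :: nat where mB: "B < real m" using reals_Archimedean2 by blast
  obtain v r where vr: "(v, snd (pq a k)) \<in> graded_cluster_vars (init_cluster, Bmat a, gvec a)" "Rv v r" "real m + 1 \<le> r"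
    using key[OF assms] by blast
  have "(THE r. Rv v r) = r" using vr(2) Rv_unique by blast
  then have "r \<in> S" unfolding S_def using vr(1) by force
  then have "r \<le> B" unfolding B_def using finS by simp
  then show False using mB vr(3) by simp
qed

theorem mainTheorem18:
  fixes a :: int
  assumes "a \<ge> 3"
  shows "infinite {d :: int. infinite {v. (v, d) \<in> graded_cluster_vars (init_cluster, Bmat a, gvec a)}}"
proof -
  have sm: "strict_mono (\<lambda>k. snd (pq a k))"
    using pq_smono[OF assms] by (simp add: strict_mono_Suc_iff)
  then have "infinite (range (\<lambda>k. snd (pq a k)))"
    using range_inj_infinite strict_mono_imp_inj_on by blast
  moreover have "range (\<lambda>k. snd (pq a k)) \<subseteq> {d :: int. infinite {v. (v, d) \<in> graded_cluster_vars (init_cluster, Bmat a, gvec a)}}"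
    using fiber_infinite[OF assms] by auto
  ultimately show ?thesis using infinite_super by blast
qed

end
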